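(* Let $1\le m\le J$. Then (i) $|\hat\varphi_{[m],l}[n]|=|\hat\psi_{[m],l}[n]|$ for all $n$ and all $0\le l\le 2^m-1$; (ii) $\varphi_{[m],l}=H(\psi_{[m],l})$ whenever $1\le l\le 2^m-2$; (iii) for all $l,\lambda\in\{0,\dots,2^m-1\}$ and $p,s\in\{0,\dots,N/2^m-1\}$, $$\langle \varphi_{[m],l}[\cdot-2^m p],\,\varphi_{[m],\lambda}[\cdot-2^m s]\rangle=\delta_{l,\lambda}\,\delta_{p,s},$$ so $\{\varphi_{[m],l}[\cdot-2^m p]\}$ is an orthonormal basis of $\Pi[N]$.
   Context: Let $N=2^{J}$ with $J\ge 1$ an integer and $\omega=e^{2\pi i/N}$. $\Pi[N]$ denotes the real vector space of real-valued $N$-periodic sequences $x=\{x[k]\}_{k\in\mathbb Z}$, with inner product $\langle x,y\rangle=\sum_{k=0}^{N-1}x[k]y[k]$ and norm $\|x\|=\langle x,x\rangle^{1/2}$. The DFT of an $N$-periodic sequence is $\hat x[n]=\sum_{k=0}^{N-1}x[k]\omega^{-kn}$, with inverse $x[k]=\frac1N\sum_{n=0}^{N-1}\hat x[n]\omega^{kn}$. For $x\in\Pi[N]$, its discrete periodic Hilbert transform $H(x)\in\Pi[N]$ has DFT $\widehat{H(x)}[n]=-i\hat x[n]$ for $0<n<N/2$, $=i\hat x[n]$ for $N/2<n<N$, and $=0$ for $n\in\{0,N/2\}$ (indices mod $N$). Discrete-spline wavelet packets: fix an integer $r\ge1$; let $U[n]=\tfrac12\big(\cos^{4r}\tfrac{\pi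 n}{N}+\sin^{4r}\tfrac{\pi n}{N}\big)$, $\beta[n]=\cos^{2r}\tfrac{\pi n}{N}/\sqrt{U[n]}$, $\alpha[n]=\omega^{n}\sin^{2r}\tfrac{\pi n}{N}/\sqrt{U[n]}$, and $\gamma_0=\beta$, $\gamma_1=\alpha$. The wavelet packets $\psi_{[m],l}\in\Pi[N]$, $1\le m\le J$, $0\le l\le 2^m-1$, are defined by their DFTs: $\hat\psi_{[1],0}=\beta$, $\hat\psi_{[1],1}=\alpha$, and for $1\le m<J$, $\lambda\in\{0,\dots,2^m-1\}$, $\mu\in\{0,1\}$: $\hat\psi_{[m+1],\rho}[n]=\gamma_\mu[2^m n]\,\hat\psi_{[m],\lambda}[n]$, where $\rho=2\lambda+\mu$ if $\lambda$ is even and $\rho=2\lambda+1-\mu$ if $\lambda$ is odd. Known facts (may be assumed): for each $m$, $\{\psi_{[m],l}[\cdot-2^m p]:0\le l\le 2^m-1,\,0\le p<N/2^m\}$ is an orthonormal basis of $\Pi[N]$; $\hat\psi_{[m],l}[0]=0$ for $l\ne0$, and $\hat\psi_{[m],l}[N/2]=0$ for $l\neq 2^m-1$. Complementary wavelet packets: $\varphi_{[m],l}\in\Pi[N]$ is defined by its DFT $\hat\varphi_{[m],l}[n]=-i\hat\psi_{[m],l}[n]$ for $0<n<N/2$, $=i\hat\psi_{[m],l}[n]$ for $N/2<n<N$, and $=\hat\psi_{[m],l}[n]$ for $n\in\{0,N/2\}$. *)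

theory Defs
  imports "HOL-Analysis.Analysis"
begin

definition PiN :: "nat \<Rightarrow> (int \<Rightarrow> real) set" where
  "PiN N = {x. \<forall>k. x (k + int N) = x k}"

definition inner_N :: "nat \<Rightarrow> (int \<Rightarrow> real) \<Rightarrow> (int \<Rightarrow> real) \<Rightarrow> real" where
  "inner_N N x y = (\<Sum>k\<in>{0..<int N}. x k * y k)"

definition omega :: "nat \<Rightarrow> complex" where
  "omega N = cis (2 * pi / real N)"

definition dft :: "nat \<Rightarrow> (int \<Rightarrow> real) \<Rightarrow> int \<Rightarrow> complex" where
  "dft N x n = (\<Sum>k\<in>{0..<int N}. complex_of_real (x k) * omega N powi (- (k * n)))"

definition idft :: "nat \<Rightarrow> (int \<Rightarrow> complex) \<Rightarrow> int \<Rightarrow> complex" where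
  "idft N X k = (1 / of_nat N) * (\<Sum>n\<in>{0..<int N}. X n * omega N powi (k * n))"

definition hmult :: "nat \<Rightarrow> int \<Rightarrow> complex" where
  "hmult N n = (let j = n mod int N in
      if 0 < j \<and> 2 * j < int N then - \<i>
      else if int N < 2 * j \<and> j < int N then \<i> else 0)"

text \<open>H(x): the real sequence whose DFT is hmult * xhat (the inverse DFT is real for real x).\<close>
definition hilbert :: "nat \<Rightarrow> (int \<Rightarrow> real) \<Rightarrow> int \<Rightarrow> real" where
  "hilbert N x k = Re (idft N (\<lambda>n. hmult N n * dft N x n) k)"

definition U_fn :: "nat \<Rightarrow> nat \<Rightarrow> int \<Rightarrow> real" where
  "U_fn N r n = (cos (pi * n / N) ^ (4 * r) + sin (pi * n / N) ^ (4 * r)) / 2"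

definition beta_fn :: "nat \<Rightarrow> nat \<Rightarrow> int \<Rightarrow> complex" where
  "beta_fn N r n = complex_of_real (cos (pi * n / N) ^ (2 * r) / sqrt (U_fn N r n))"

definition alpha_fn :: "nat \<Rightarrow> nat \<Rightarrow> int \<Rightarrow> complex" where
  "alpha_fn N r n = omega N powi n * complex_of_real (sin (pi * n / N) ^ (2 * r) / sqrt (U_fn N r n))"

definition gamma_fn :: "nat \<Rightarrow> nat \<Rightarrow> nat \<Rightarrow> int \<Rightarrow> complex" where
  "gamma_fn N r \<mu> n = (if \<mu> = 0 then beta_fn N r n else alpha_fn N r n)"

text \<open>Level 0 is the constant 1 (only for l = 0),
  so that level 1 gives beta and alpha as in the paper; for m >= 1 the recursion is the paper's:
  rho = 2 lam + mu (lambda even), rho = 2 lam + 1 - mu (lambda odd).\<close>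
fun psihat :: "nat \<Rightarrow> nat \<Rightarrow> nat \<Rightarrow> nat \<Rightarrow> int \<Rightarrow> complex" where
  "psihat J r 0 l n = (if l = 0 then 1 else 0)"
| "psihat J r (Suc m) \<rho> n =
     (let lam = \<rho> div 2; \<mu> = (if even lam then \<rho> mod 2 else 1 - \<rho> mod 2)
      in gamma_fn (2 ^ J) r \<mu> (2 ^ m * n) * psihat J r m lam n)"

definition phihat :: "nat \<Rightarrow> nat \<Rightarrow> nat \<Rightarrow> nat \<Rightarrow> int \<Rightarrow> complex" where
  "phihat J r m l n = (let N = int (2 ^ J); j = n mod N in
      if 0 < j \<and> 2 * j < N then - \<i> * psihat J r m l n
      else if N < 2 * j \<and> j < N then \<i> * psihat J r m l n
      else psihat J r m l n)"

text \<open>The sequences themselves (real-valued; the inverse DFT is real since the DFT is Hermitian).\<close>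
definition psi :: "nat \<Rightarrow> nat \<Rightarrow> nat \<Rightarrow> nat \<Rightarrow> int \<Rightarrow> real" where
  "psi J r m l k = Re (idft (2 ^ J) (psihat J r m l) k)"

definition phi :: "nat \<Rightarrow> nat \<Rightarrow> nat \<Rightarrow> nat \<Rightarrow> int \<Rightarrow> real" where
  "phi J r m l k = Re (idft (2 ^ J) (phihat J r m l) k)"

end

theory Submission
  imports Defs "Jordan_Normal_Form.Determinant"
begin

definition ee :: "nat \<Rightarrow> int \<Rightarrow> complex" where
  "ee N e = cis (2 * pi * of_int e / real N)"

lemma omega_powi: "omega N powi e = ee N e"
  unfolding omega_def ee_def cis_power_int by (simp add: field_simps)

lemma ee_add: "ee N (a + b) = ee N a * ee N b"
  unfolding ee_def cis_mult by (intro arg_cong[where f=cis]) (simp add: add_divide_distrib algebra_simps)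

lemma ee_cnj: "cnj (ee N a) = ee N (- a)"
  unfolding ee_def cis_cnj by simp

lemma ee_zero[simp]: "ee N 0 = 1"
  unfolding ee_def by simp

lemma ee_mult_N: "N > 0 \<Longrightarrow> ee N (int N * k) = 1"
proof -
  assume "N > 0"
  have "2 * pi * of_int (int N * k) / real N = 2 * pi * of_int k" using \<open>N>0\<close> by simp
  then show ?thesis unfolding ee_def by simp
qed

lemma ee_one_iff: assumes "N > 0" shows "ee N d = 1 \<longleftrightarrow> int N dvd d"
proof
  assume "ee N d = 1"
  then have "exp (\<i> * complex_of_real (2 * pi * of_int d / real N)) = 1"
    unfolding ee_def cis_conv_exp by simp
  then obtain n where n: "2 * pi * of_int d / real N = real_of_int (2 * n) * pi"
    unfolding exp_eq_1 by auto
  then have "of_int d = real N * of_int n" using assms by (simp add: field_simps)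
  then have "d = int N * n" by (metis of_int_eq_iff of_int_mult of_int_of_nat_eq)
  then show "int N dvd d" by simp
next
  assume "int N dvd d"
  then obtain k where "d = int N * k" by auto
  then show "ee N d = 1" using ee_mult_N assms by simp
qed

lemma ee_pow: "ee N (d * int t) = ee N d ^ t"
proof -
  have "cis (2 * pi * of_int d / N) ^ t = cis (real t * (2 * pi * of_int d / N))" by (rule Complex.DeMoivre)
  then show ?thesis unfolding ee_def by (simp add: field_simps)
qed

lemma sum_int_nat: "(\<Sum>t\<in>{0..<int N}. f t) = (\<Sum>t<N. f (int t))"
proof -
  have "{0..<int N} = int ` {..<N}" by (simp add: image_int_atLeastLessThan lessThan_atLeast0)
  then show ?thesis by (simp add: sum.reindex)
qed

lemma geom_ee: assumes "N > 0"
  shows "(\<Sum>t\<in>{0..<int N}. ee N (d * t)) = (if int N dvd d then of_nat N else 0)"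
proof -
  have "(\<Sum>t\<in>{0..<int N}. ee N (d * t)) = (\<Sum>t<N. ee N d ^ t)"
    by (simp add: sum_int_nat ee_pow)
  also have "\<dots> = (if int N dvd d then of_nat N else 0)"
  proof (cases "int N dvd d")
    case True
    then have "ee N d = 1" using ee_one_iff[OF assms] by simp
    then show ?thesis using True by simp
  next
    case False
    then have ne: "ee N d \<noteq> 1" using ee_one_iff[OF assms] by simp
    have "ee N d ^ N = ee N (d * int N)" by (simp add: ee_pow)
    also have "\<dots> = 1" using ee_mult_N[OF assms, of d] by (simp add: mult.commute)
    finally show ?thesis using False ne by (simp add: geometric_sum)
  qed
  finally show ?thesis .
qed


lemma ee_comb: "ee N ((k - a) * n) * ee N (- ((k - b) * j)) = ee N (b * j - a * n) * ee N ((n - j) * k)"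
  unfolding ee_add[symmetric] by (rule arg_cong[where f="ee N"]) (simp add: algebra_simps)

lemma idft_ee: "idft N X k = (1 / of_nat N) * (\<Sum>n\<in>{0..<int N}. X n * ee N (k * n))"
  unfolding idft_def omega_powi by simp

lemma dvd_diff_iff_eq: assumes "n \<in> {0..<int N}" "j \<in> {0..<int N}"
  shows "int N dvd (n - j) \<longleftrightarrow> j = n"
proof
  assume "int N dvd (n - j)"
  then obtain c where c: "n - j = int N * c" by auto
  have lt: "\<bar>n - j\<bar> < int N" using assms by auto
  have "c = 0"
  proof (rule ccontr)
    assume "c \<noteq> 0"
    then have "\<bar>c\<bar> \<ge> 1" by simp
    then have "\<bar>int N * c\<bar> \<ge> int N" by (simp add: abs_mult mult_le_cancel_left1)
    then show False using lt c by simp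
  qed
  then show "j = n" using c by simp
qed simp

lemma planch: assumes "N > 0"
  shows "(\<Sum>k\<in>{0..<int N}. idft N X (k - a) * cnj (idft N Y (k - b)))
       = (1 / of_nat N) * (\<Sum>n\<in>{0..<int N}. X n * cnj (Y n) * ee N ((b - a) * n))"
proof -
  let ?I = "{0..<int N}"
  have "(\<Sum>k\<in>?I. idft N X (k - a) * cnj (idft N Y (k - b)))
     = (\<Sum>k\<in>?I. \<Sum>n\<in>?I. \<Sum>j\<in>?I. (1 / of_nat N)^2 * (X n * cnj (Y j) * ee N (b * j - a * n)) * ee N ((n - j) * k))"
  proof (rule sum.cong[OF refl])
    fix k
    have "idft N X (k - a) * cnj (idft N Y (k - b))
       = (1 / of_nat N) * (\<Sum>n\<in>?I. X n * ee N ((k - a) * n)) * ((1 / of_nat N) * (\<Sum>j\<in>?I. cnj (Y j) * ee N (- ((k - b) * j))))"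
      by (simp add: idft_ee cnj_sum ee_cnj)
    also have "\<dots> = (\<Sum>n\<in>?I. \<Sum>j\<in>?I. (1 / of_nat N)^2 * (X n * cnj (Y j)) * (ee N ((k - a) * n) * ee N (- ((k - b) * j))))"
      by (subst sum.swap) (simp add: sum_product sum_distrib_left power2_eq_square mult_ac)
    also have "\<dots> = (\<Sum>n\<in>?I. \<Sum>j\<in>?I. (1 / of_nat N)^2 * (X n * cnj (Y j) * ee N (b * j - a * n)) * ee N ((n - j) * k))"
      by (simp only: ee_comb, simp add: mult_ac)
    finally show "idft N X (k - a) * cnj (idft N Y (k - b)) = \<dots>" .
  qed
  also have "\<dots> = (\<Sum>n\<in>?I. \<Sum>k\<in>?I. \<Sum>j\<in>?I. (1 / of_nat N)^2 * (X n * cnj (Y j) * ee N (b * j - a * n)) * ee N ((n - j) * k))"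
    by (rule sum.swap)
  also have "\<dots> = (\<Sum>n\<in>?I. \<Sum>j\<in>?I. \<Sum>k\<in>?I. (1 / of_nat N)^2 * (X n * cnj (Y j) * ee N (b * j - a * n)) * ee N ((n - j) * k))"
    by (rule sum.cong[OF refl], rule sum.swap)
  also have "\<dots> = (\<Sum>n\<in>?I. \<Sum>j\<in>?I. (1 / of_nat N)^2 * (X n * cnj (Y j) * ee N (b * j - a * n)) * (\<Sum>k\<in>?I. ee N ((n - j) * k)))"
    by (simp add: sum_distrib_left)
  also have "\<dots> = (\<Sum>n\<in>?I. \<Sum>j\<in>?I. if j = n then (1 / of_nat N)^2 * (X n * cnj (Y n) * ee N ((b - a) * n)) * of_nat N else 0)"
  proof (intro sum.cong refl)
    fix n j assume "n \<in> ?I" "j \<in> ?I"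
    then show "(1 / of_nat N)^2 * (X n * cnj (Y j) * ee N (b * j - a * n)) * (\<Sum>k\<in>?I. ee N ((n - j) * k))
      = (if j = n then (1 / of_nat N)^2 * (X n * cnj (Y n) * ee N ((b - a) * n)) * of_nat N else 0)"
      using dvd_diff_iff_eq[of n N j] by (simp only: geom_ee[OF assms]) (simp add: left_diff_distrib)
  qed
  also have "\<dots> = (\<Sum>n\<in>?I. (1 / of_nat N)^2 * (X n * cnj (Y n) * ee N ((b - a) * n)) * of_nat N)"
    by simp
  also have "\<dots> = (1 / of_nat N) * (\<Sum>n\<in>?I. X n * cnj (Y n) * ee N ((b - a) * n))"
    using assms by (simp add: sum_distrib_left power2_eq_square mult_ac)
  finally show ?thesis .
qed


definition periodic :: "nat \<Rightarrow> (int \<Rightarrow> 'a) \<Rightarrow> bool" where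
  "periodic N g \<longleftrightarrow> (\<forall>n. g (n + int N) = g n)"

lemma periodic_nat: assumes "periodic N g" shows "g (n + int N * int k) = g n"
proof (induction k arbitrary: n)
  case 0 then show ?case by simp
next
  case (Suc k)
  have "g (n + int N * int (Suc k)) = g ((n + int N * int k) + int N)" by (simp add: algebra_simps)
  also have "\<dots> = g (n + int N * int k)" using assms unfolding periodic_def by blast
  finally show ?case using Suc by simp
qed

lemma periodic_int: assumes "periodic N g" shows "g (n + int N * k) = g n"
proof (cases "k \<ge> 0")
  case True
  then obtain k' where "k = int k'" by (metis nonneg_int_cases)
  then show ?thesis using periodic_nat[OF assms] by simp
next
  case False
  then obtain k' where k: "k = - int k'" by (metis linorder_not_le nonpos_int_cases order_less_imp_le)
  have "g n = g ((n + int N * k) + int N * int k')" by (simp add: k)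
  also have "\<dots> = g (n + int N * k)" by (rule periodic_nat[OF assms])
  finally show ?thesis by simp
qed

lemma periodic_mod: assumes "periodic N g" shows "g n = g (n mod int N)"
proof -
  have "n = n mod int N + int N * (n div int N)" by simp
  then have "g n = g (n mod int N + int N * (n div int N))" by simp
  also have "\<dots> = g (n mod int N)" by (rule periodic_int[OF assms])
  finally show ?thesis .
qed

lemma sum_reflect: assumes "periodic N g" "N > 0"
  shows "(\<Sum>n\<in>{0..<int N}. g (- n)) = (\<Sum>n\<in>{0..<int N}. g n)"
proof -
  let ?h = "\<lambda>n. (- n) mod int N"
  have "(\<Sum>n\<in>{0..<int N}. g (- n)) = (\<Sum>n\<in>{0..<int N}. g (?h n))"
    using periodic_mod[OF assms(1)] by simp
  also have "\<dots> = (\<Sum>n\<in>{0..<int N}. g n)"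
  proof -
    have inv: "?h (?h a) = a" if a: "a \<in> {0..<int N}" for a
    proof -
      have "(- ((- a) mod int N)) mod int N = (- (- a)) mod int N" by (rule mod_minus_eq)
      then show ?thesis using a by simp
    qed
    show ?thesis
      by (rule sum.reindex_bij_witness[where i = ?h and j = ?h]) (use inv assms(2) in auto)
  qed
  finally show ?thesis .
qed

lemma ee_periodic: "N > 0 \<Longrightarrow> ee N (a + int N * k) = ee N a"
  by (simp add: ee_add ee_mult_N)

definition hermitian :: "(int \<Rightarrow> complex) \<Rightarrow> bool" where
  "hermitian X \<longleftrightarrow> (\<forall>n. X (- n) = cnj (X n))"

lemma idft_real: assumes "periodic N X" "hermitian X" "N > 0"
  shows "cnj (idft N X k) = idft N X k"
proof -
  let ?g = "\<lambda>n. X n * ee N (k * n)"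
  have pg: "periodic N ?g" unfolding periodic_def
  proof
    fix n
    have "ee N (k * (n + int N)) = ee N (k * n + int N * k)" by (simp add: algebra_simps)
    also have "\<dots> = ee N (k * n)" by (rule ee_periodic[OF assms(3)])
    finally show "?g (n + int N) = ?g n" using assms(1) unfolding periodic_def by simp
  qed
  have "cnj (idft N X k) = (1 / of_nat N) * (\<Sum>n\<in>{0..<int N}. cnj (X n) * ee N (- (k * n)))"
    by (simp add: idft_ee cnj_sum ee_cnj)
  also have "\<dots> = (1 / of_nat N) * (\<Sum>n\<in>{0..<int N}. ?g (- n))"
    using assms(2) unfolding hermitian_def by simp
  also have "\<dots> = (1 / of_nat N) * (\<Sum>n\<in>{0..<int N}. ?g n)"
    by (simp only: sum_reflect[OF pg assms(3)])
  also have "\<dots> = idft N X k" by (simp add: idft_ee)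
  finally show ?thesis .
qed

lemma idft_real': assumes "periodic N X" "hermitian X" "N > 0"
  shows "complex_of_real (Re (idft N X k)) = idft N X k"
proof -
  have "Im (cnj (idft N X k)) = Im (idft N X k)" using idft_real[OF assms, of k] by simp
  then have "Im (idft N X k) = 0" by simp
  then show ?thesis by (simp add: complex_eq_iff)
qed

lemma dft_inv: assumes "periodic N X" "hermitian X" "N > 0"
  shows "dft N (\<lambda>k. Re (idft N X k)) n = X n"
proof -
  let ?I = "{0..<int N}"
  have "dft N (\<lambda>k. Re (idft N X k)) n = (\<Sum>k\<in>?I. idft N X k * ee N (- (k * n)))"
    unfolding dft_def omega_powi using idft_real'[OF assms] by simp
  also have "\<dots> = (\<Sum>k\<in>?I. \<Sum>j\<in>?I. (1 / of_nat N) * X j * ee N ((j - n) * k))"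
    by (simp add: idft_ee sum_distrib_left sum_distrib_right ee_add[symmetric] algebra_simps)
  also have "\<dots> = (\<Sum>j\<in>?I. (1 / of_nat N) * X j * (\<Sum>k\<in>?I. ee N ((j - n) * k)))"
    by (subst sum.swap) (simp add: sum_distrib_left)
  also have "\<dots> = (\<Sum>j\<in>?I. if j = n mod int N then X j else 0)"
  proof (rule sum.cong[OF refl])
    fix j assume j: "j \<in> ?I"
    have "int N dvd (j - n) \<longleftrightarrow> j mod int N = n mod int N" by (simp add: mod_eq_dvd_iff)
    also have "\<dots> \<longleftrightarrow> j = n mod int N" using j by simp
    finally show "(1 / of_nat N) * X j * (\<Sum>k\<in>?I. ee N ((j - n) * k)) = (if j = n mod int N then X j else 0)"
      using assms(3) by (simp add: geom_ee)
  qed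
  also have "\<dots> = X (n mod int N)" using assms(3) by (simp add: sum.delta')
  also have "\<dots> = X n" using periodic_mod[OF assms(1)] by simp
  finally show ?thesis .
qed


lemma U_pos: "U_fn N r x > 0"
proof -
  let ?t = "pi * real_of_int x / real N"
  have a: "cos ?t ^ (4 * r) \<ge> 0" "sin ?t ^ (4 * r) \<ge> 0"
    by (simp_all add: power_mult zero_le_power2 zero_le_power)
  have "\<not> (cos ?t ^ (4 * r) = 0 \<and> sin ?t ^ (4 * r) = 0)"
  proof
    assume "cos ?t ^ (4 * r) = 0 \<and> sin ?t ^ (4 * r) = 0"
    then have "cos ?t = 0" "sin ?t = 0" by simp_all
    then show False using sin_cos_squared_add[of ?t] by simp
  qed
  moreover have "\<And>A B :: real. \<not> (A = 0 \<and> B = 0) \<Longrightarrow> 0 \<le> A \<Longrightarrow> 0 \<le> B \<Longrightarrow> 0 < (A + B) / 2"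
    by (cases "A = 0") auto
  ultimately show ?thesis unfolding U_fn_def using a by blast
qed

lemma even_pow_neg: "(- (y::real)) ^ (2 * r) = y ^ (2 * r)"
  by (simp add: power_mult)

lemma even_pow_neg4: "(- (y::real)) ^ (4 * r) = y ^ (4 * r)"
proof -
  have "(4::nat) * r = 2 * (2 * r)" by simp
  then show ?thesis by (simp only: power_mult) simp
qed


lemma alpha_ee: "alpha_fn N r x = ee N x * complex_of_real (sin (pi * real_of_int x / real N) ^ (2 * r) / sqrt (U_fn N r x))"
  unfolding alpha_fn_def omega_powi by simp

definition hN :: "nat \<Rightarrow> int" where "hN J = 2 ^ (J - 1)"

context fixes J :: nat assumes J1: "1 \<le> J"
begin


lemma N_eq: "real (2 ^ J :: nat) = 2 * 2 ^ (J - 1)"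
proof -
  have "(2::nat) ^ J = 2 * 2 ^ (J - 1)" using J1 by (metis Suc_diff_le diff_Suc_1 power_Suc)
  then show ?thesis by simp
qed

lemma Nint_eq: "int (2 ^ J) = 2 * (hN J)"
proof -
  have "(2::nat) ^ J = 2 * 2 ^ (J - 1)" using J1 by (metis Suc_diff_le diff_Suc_1 power_Suc)
  then show ?thesis unfolding hN_def by simp
qed

lemma angle_shift: "pi * real_of_int (x + (hN J)) / real (2 ^ J :: nat) = pi * real_of_int x / real (2 ^ J :: nat) + pi / 2"
  unfolding N_eq hN_def by (simp add: field_simps)

lemma angle_shiftN: "pi * real_of_int (x + int (2 ^ J)) / real (2 ^ J :: nat) = pi * real_of_int x / real (2 ^ J :: nat) + pi"
  by (simp add: field_simps)

lemma angle_hN: "pi * real_of_int (hN J) / real (2 ^ J :: nat) = pi / 2"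
  unfolding N_eq hN_def by simp

lemma ee_hN: "ee (2 ^ J) (hN J) = -1"
proof -
  have "2 * pi * real_of_int (hN J) / real (2 ^ J :: nat) = pi" unfolding N_eq hN_def by simp
  then show ?thesis unfolding ee_def by simp
qed

lemma U_shift: "U_fn (2 ^ J) r (x + (hN J)) = U_fn (2 ^ J) r x"
  unfolding U_fn_def angle_shift by (simp add: cos_add sin_add even_pow_neg4 add.commute)

lemma beta_shift: "beta_fn (2 ^ J) r (x + (hN J)) =
   complex_of_real (sin (pi * real_of_int x / real (2 ^ J :: nat)) ^ (2 * r) / sqrt (U_fn (2 ^ J) r x))"
  unfolding beta_fn_def U_shift unfolding angle_shift by (simp add: cos_add even_pow_neg)

lemma alpha_shift: "alpha_fn (2 ^ J) r (x + (hN J)) =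
   - ee (2 ^ J) x * complex_of_real (cos (pi * real_of_int x / real (2 ^ J :: nat)) ^ (2 * r) / sqrt (U_fn (2 ^ J) r x))"
  unfolding alpha_fn_def U_shift omega_powi ee_add ee_hN unfolding angle_shift by (simp add: sin_add)


lemma gamma_periodic: "gamma_fn (2 ^ J) r \<mu> (x + int (2 ^ J)) = gamma_fn (2 ^ J) r \<mu> x"
proof -
  have U: "U_fn (2 ^ J) r (x + int (2 ^ J)) = U_fn (2 ^ J) r x"
    unfolding U_fn_def angle_shiftN by (simp add: even_pow_neg4)
  have e: "ee (2 ^ J) (x + int (2 ^ J)) = ee (2 ^ J) x" using ee_periodic[of "2^J" x 1] by simp
  show ?thesis unfolding gamma_fn_def beta_fn_def alpha_ee U e unfolding angle_shiftN
    by (simp add: even_pow_neg)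
qed

end

lemma qmf_alg:
  fixes c s u :: real and w :: complex
  assumes u: "u = (c^2 + s^2)/2" "u > 0" and w: "w * cnj w = 1"
  defines "b0 \<equiv> complex_of_real (c / sqrt u)" and "b1 \<equiv> complex_of_real (s / sqrt u)"
  defines "a0 \<equiv> w * complex_of_real (s / sqrt u)" and "a1 \<equiv> - w * complex_of_real (c / sqrt u)"
  shows "b0 * cnj b0 + b1 * cnj b1 = 2" "a0 * cnj a0 + a1 * cnj a1 = 2"
        "b0 * cnj a0 + b1 * cnj a1 = 0" "a0 * cnj b0 + a1 * cnj b1 = 0"
proof -
  have sq: "sqrt u * sqrt u = u" using u by simp
  have r: "(c / sqrt u) * (c / sqrt u) + (s / sqrt u) * (s / sqrt u) = 2"
    using u sq by (simp add: field_simps power2_eq_square)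
  have r': "complex_of_real (c / sqrt u) * complex_of_real (c / sqrt u) + complex_of_real (s / sqrt u) * complex_of_real (s / sqrt u) = 2"
    using arg_cong[OF r, of complex_of_real] unfolding of_real_add of_real_mult of_real_numeral .
  show "b0 * cnj b0 + b1 * cnj b1 = 2" unfolding b0_def b1_def complex_cnj_complex_of_real by (rule r')
  have "a0 * cnj a0 + a1 * cnj a1 = (w * cnj w) * (complex_of_real (c / sqrt u) * complex_of_real (c / sqrt u) + complex_of_real (s / sqrt u) * complex_of_real (s / sqrt u))"
    unfolding a0_def a1_def by (simp add: algebra_simps)
  then show "a0 * cnj a0 + a1 * cnj a1 = 2" using r' w by simp
  show "b0 * cnj a0 + b1 * cnj a1 = 0" unfolding b0_def b1_def a0_def a1_def by (simp add: algebra_simps)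
  show "a0 * cnj b0 + a1 * cnj b1 = 0" unfolding b0_def b1_def a0_def a1_def by (simp add: algebra_simps)
qed

context fixes J :: nat assumes J1: "1 \<le> J"
begin

lemma qmf: "gamma_fn (2^J) r \<mu> x * cnj (gamma_fn (2^J) r \<mu>' x)
   + gamma_fn (2^J) r \<mu> (x + hN J) * cnj (gamma_fn (2^J) r \<mu>' (x + hN J))
   = (if (\<mu> = 0) = (\<mu>' = 0) then 2 else 0)"
proof -
  let ?t = "pi * real_of_int x / real (2 ^ J :: nat)"
  define c where "c = cos ?t ^ (2 * r)"
  define s where "s = sin ?t ^ (2 * r)"
  define u where "u = U_fn (2^J) r x"
  define w where "w = ee (2^J) x"
  have uu: "u = (c^2 + s^2)/2" unfolding u_def U_fn_def c_def s_def
    by (simp add: power_mult[symmetric] mult.commute)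
  have up: "u > 0" unfolding u_def by (rule U_pos)
  have ww: "w * cnj w = 1" unfolding w_def ee_cnj ee_add[symmetric] by simp
  have g0: "gamma_fn (2^J) r 0 x = complex_of_real (c / sqrt u)"
    unfolding gamma_fn_def beta_fn_def c_def u_def by simp
  have g0h: "gamma_fn (2^J) r 0 (x + hN J) = complex_of_real (s / sqrt u)"
    using beta_shift[OF J1, where r=r and x=x] unfolding gamma_fn_def s_def u_def by simp
  have g1: "\<mu> \<noteq> 0 \<Longrightarrow> gamma_fn (2^J) r \<mu> x = w * complex_of_real (s / sqrt u)" for \<mu>
    using alpha_ee[where N="2^J" and r=r and x=x] unfolding gamma_fn_def s_def u_def w_def by simp
  have g1h: "\<mu> \<noteq> 0 \<Longrightarrow> gamma_fn (2^J) r \<mu> (x + hN J) = - w * complex_of_real (c / sqrt u)" for \<mu>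
    using alpha_shift[OF J1, where r=r and x=x] unfolding gamma_fn_def c_def u_def w_def by simp
  note Q = qmf_alg[OF uu up ww]
  show ?thesis
    by (cases "\<mu> = 0"; cases "\<mu>' = 0") (simp_all only: g0 g0h g1 g1h Q simp_thms if_True if_False not_False_eq_True)
qed

end

lemma sum_split2: "(\<Sum>q<2*(K::nat). f q) = (\<Sum>q<K. f (2*q) + f (2*q+1))"
  by (induction K) (simp_all add: algebra_simps)

lemma psihat_Suc: "psihat J r (Suc m) \<rho> n =
   gamma_fn (2 ^ J) r (if even (\<rho> div 2) then \<rho> mod 2 else 1 - \<rho> mod 2) (2 ^ m * n) * psihat J r m (\<rho> div 2) n"
  by (simp add: Let_def)

declare psihat.simps(2)[simp del]

lemma gamma_periodic': "1 \<le> J \<Longrightarrow> periodic (2^J) (gamma_fn (2 ^ J) r \<mu>)"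
  unfolding periodic_def using gamma_periodic by blast

lemma psihat_periodic: assumes "1 \<le> J" shows "periodic (2^J) (psihat J r m l)"
proof (induction m arbitrary: l)
  case 0 then show ?case by (simp add: periodic_def)
next
  case (Suc m)
  show ?case unfolding periodic_def
  proof
    fix n
    have "gamma_fn (2 ^ J) r \<mu> (2 ^ m * (n + int (2^J))) = gamma_fn (2 ^ J) r \<mu> (2 ^ m * n)" for \<mu>
    proof -
      have eq: "2 ^ m * (n + int (2^J)) = 2 ^ m * n + int (2^J) * int (2^m)" by (simp add: algebra_simps)
      show ?thesis unfolding eq by (rule periodic_nat[OF gamma_periodic'[OF assms]])
    qed
    then show "psihat J r (Suc m) l (n + int (2 ^ J)) = psihat J r (Suc m) l n"
      using Suc[unfolded periodic_def] by (simp add: psihat_Suc)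
  qed
qed

lemma gamma_herm: "gamma_fn N r \<mu> (- x) = cnj (gamma_fn N r \<mu> x)"
proof -
  have U: "U_fn N r (- x) = U_fn N r x" unfolding U_fn_def by (simp add: even_pow_neg4)
  show ?thesis unfolding gamma_fn_def beta_fn_def alpha_ee U
    by (simp add: even_pow_neg ee_cnj)
qed

lemma psihat_herm: "hermitian (psihat J r m l)"
  unfolding hermitian_def
proof (induction m arbitrary: l)
  case 0 then show ?case by simp
next
  case (Suc m)
  show ?case
  proof
    fix n
    show "psihat J r (Suc m) l (- n) = cnj (psihat J r (Suc m) l n)"
      using Suc gamma_herm by (simp add: psihat_Suc)
  qed
qed

lemma psihat_zero: assumes "1 \<le> r" shows "l \<noteq> 0 \<Longrightarrow> psihat J r m l 0 = 0"
proof (induction m arbitrary: l)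
  case 0 then show ?case by simp
next
  case (Suc m)
  show ?case
  proof (cases "l div 2 = 0")
    case False then show ?thesis using Suc by (simp add: psihat_Suc)
  next
    case True
    then have "l = 1" using Suc.prems by auto
    then show ?thesis using assms by (simp add: psihat_Suc gamma_fn_def alpha_fn_def)
  qed
qed

lemma psihat_half: assumes "1 \<le> r" "1 \<le> J"
  shows "1 \<le> m \<Longrightarrow> m \<le> J \<Longrightarrow> l \<noteq> 2 ^ m - 1 \<Longrightarrow> psihat J r m l (hN J) = 0"
proof (induction m arbitrary: l)
  case 0 then show ?case by simp
next
  case (Suc m)
  show ?case
  proof (cases "m = 0")
    case True
    show ?thesis
    proof (cases "l div 2 = 0")
      case False then show ?thesis using True by (simp add: psihat_Suc)
    next
      case l0: True
      have "l < 2" using l0 by simp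
      moreover have "l \<noteq> 1" using Suc.prems(3) True by simp
      ultimately have "l = 0" by simp
      moreover have "cos (pi * real_of_int (hN J) / real (2 ^ J :: nat)) = 0"
        unfolding angle_hN[OF assms(2)] by simp
      ultimately show ?thesis using True assms(1) by (simp add: psihat_Suc gamma_fn_def beta_fn_def)
    qed
  next
    case False
    show ?thesis
    proof (cases "l div 2 = 2 ^ m - 1")
      case False2: False
      have z: "psihat J r m (l div 2) (hN J) = 0"
        using Suc.IH[of "l div 2"] False2 False Suc.prems(2) by simp
      show ?thesis by (simp add: psihat_Suc z)
    next
      case True
      obtain k where mk: "m = Suc k" using \<open>m \<noteq> 0\<close> by (cases m) auto
      define q where "q = (2::nat) ^ k"
      have q1: "q \<ge> 1" unfolding q_def by simp
      have pm: "(2::nat) ^ m = 2 * q" unfolding q_def mk by simp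
      have ld: "l div 2 = 2 * (q - 1) + 1" using True pm q1 by linarith
      have odd: "odd (l div 2)" unfolding ld by simp
      have ps: "(2::nat) ^ Suc m = 2 * 2 ^ m" by simp
      have "2 ^ Suc m - 1 = 2 * (l div 2) + 1" using ld pm q1 ps by linarith
      then have "l \<noteq> 2 * (l div 2) + 1" using Suc.prems(3) by simp
      then have "l mod 2 = 0" by presburger
      then have mu: "(if even (l div 2) then l mod 2 else 1 - l mod 2) = 1" using odd by simp
      have ang: "pi * real_of_int (2 ^ m * hN J) / real (2 ^ J :: nat) = real (2 ^ k) * pi"
      proof -
        have "real_of_int (2 ^ m * hN J) = 2 * 2 ^ k * 2 ^ (J - 1)" unfolding hN_def mk by simp
        then show ?thesis unfolding N_eq[OF assms(2)] by simp
      qed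
      have s0: "sin (pi * real_of_int (2 ^ m * hN J) / real (2 ^ J :: nat)) = 0" unfolding ang by (rule sin_npi)
      have "gamma_fn (2 ^ J) r 1 (2 ^ m * hN J) = 0"
        using assms(1) s0 by (simp add: gamma_fn_def alpha_fn_def)
      then show ?thesis unfolding psihat_Suc mu by simp
    qed
  qed
qed


lemma key: assumes J1: "1 \<le> J"
  shows "m \<le> J \<Longrightarrow> l < 2 ^ m \<Longrightarrow> l' < 2 ^ m \<Longrightarrow>
    (\<Sum>q<2^m. psihat J r m l (t + int q * 2 ^ (J - m)) * cnj (psihat J r m l' (t + int q * 2 ^ (J - m))))
    = (if l = l' then 2 ^ m else 0)"
proof (induction m arbitrary: l l' t)
  case 0 then show ?case by simp
next
  case (Suc m)
  let ?M' = "(2::int) ^ (J - Suc m)"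
  let ?M = "(2::int) ^ (J - m)"
  let ?lam = "l div 2" and ?lam' = "l' div 2"
  let ?mu = "if even (l div 2) then l mod 2 else 1 - l mod 2"
  let ?mu' = "if even (l' div 2) then l' mod 2 else 1 - l' mod 2"
  let ?g = "\<lambda>\<mu> y. gamma_fn (2 ^ J) r \<mu> y"
  obtain d where Jd: "J = Suc m + d" using Suc.prems(1) le_Suc_ex by blast
  have MM: "?M = 2 * ?M'" unfolding Jd by simp
  have mM': "(2::int) ^ m * ?M' = hN J" unfolding hN_def Jd by (simp add: power_add)
  have mM: "(2::int) ^ m * ?M = int (2 ^ J)" unfolding Jd by (simp add: power_add)
  define S where "S e = (\<Sum>q<2^m. psihat J r m ?lam (t + int e * ?M' + int q * ?M) * cnj (psihat J r m ?lam' (t + int e * ?M' + int q * ?M)))" for e :: nat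
  have lam: "?lam < 2 ^ m" "?lam' < 2 ^ m" using Suc.prems by auto
  have S: "S e = (if ?lam = ?lam' then 2 ^ m else 0)" for e
    unfolding S_def using Suc.IH[of ?lam ?lam' "t + int e * ?M'"] Suc.prems lam by simp
  have F: "psihat J r (Suc m) l (t + int (2*q+e) * ?M') * cnj (psihat J r (Suc m) l' (t + int (2*q+e) * ?M'))
     = (?g ?mu (2^m * t + int e * hN J) * cnj (?g ?mu' (2^m * t + int e * hN J))) *
       (psihat J r m ?lam (t + int e * ?M' + int q * ?M) * cnj (psihat J r m ?lam' (t + int e * ?M' + int q * ?M)))"
    for q e
  proof -
    have arg: "t + int (2*q+e) * ?M' = t + int e * ?M' + int q * ?M" using MM by (simp add: algebra_simps)
    have arg2: "2 ^ m * (t + int e * ?M' + int q * ?M) = (2^m * t + int e * hN J) + int (2^J) * int q"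
      using mM mM' by (simp add: algebra_simps)
    have gp: "?g \<mu> (2 ^ m * (t + int e * ?M' + int q * ?M)) = ?g \<mu> (2^m * t + int e * hN J)" for \<mu>
      unfolding arg2 by (rule periodic_nat[OF gamma_periodic'[OF J1]])
    show ?thesis unfolding arg psihat_Suc gp by (simp add: mult_ac)
  qed
  have "(\<Sum>q<2^Suc m. psihat J r (Suc m) l (t + int q * ?M') * cnj (psihat J r (Suc m) l' (t + int q * ?M')))
     = (\<Sum>q<2^m. psihat J r (Suc m) l (t + int (2*q+0) * ?M') * cnj (psihat J r (Suc m) l' (t + int (2*q+0) * ?M'))
          + psihat J r (Suc m) l (t + int (2*q+1) * ?M') * cnj (psihat J r (Suc m) l' (t + int (2*q+1) * ?M')))"
    by (simp only: power_Suc sum_split2) simp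
  also have "\<dots> = (?g ?mu (2^m * t) * cnj (?g ?mu' (2^m * t))) * S 0
        + (?g ?mu (2^m * t + hN J) * cnj (?g ?mu' (2^m * t + hN J))) * S 1"
    unfolding F S_def by (simp add: sum.distrib sum_distrib_left)
  also have "\<dots> = (if ?lam = ?lam' then 2 ^ m * (if (?mu = 0) = (?mu' = 0) then 2 else 0) else 0)"
  proof -
    define G0 where "G0 = ?g ?mu (2^m * t) * cnj (?g ?mu' (2^m * t))"
    define G1 where "G1 = ?g ?mu (2^m * t + hN J) * cnj (?g ?mu' (2^m * t + hN J))"
    have Q: "G0 + G1 = (if (?mu = 0) = (?mu' = 0) then 2 else 0)"
      unfolding G0_def G1_def by (rule qmf[OF J1])
    have "G0 * S 0 + G1 * S 1 = (if ?lam = ?lam' then 2 ^ m * (G0 + G1) else 0)"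
      unfolding S by (simp add: algebra_simps)
    then show ?thesis unfolding G0_def[symmetric] G1_def[symmetric] Q .
  qed
  also have "\<dots> = (if l = l' then 2 ^ Suc m else 0)"
  proof -
    have "(?lam = ?lam' \<and> ((?mu = 0) = (?mu' = 0))) \<longleftrightarrow> l = l'"
    proof
      assume H: "?lam = ?lam' \<and> ((?mu = 0) = (?mu' = 0))"
      have a: "l mod 2 = 0 \<or> l mod 2 = 1" "l' mod 2 = 0 \<or> l' mod 2 = 1" by auto
      have "l mod 2 = l' mod 2"
      proof (cases "even (l div 2)")
        case True
        then have "even (l' div 2)" using H by simp
        then show ?thesis using H True a by auto
      next
        case False
        then have "odd (l' div 2)" using H by simp
        then show ?thesis using H False a by auto
      qed
      then show "l = l'" using H by (metis div_mult_mod_eq)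
    qed simp
    then show ?thesis by auto
  qed
  finally show ?case .
qed


definition phm :: "nat \<Rightarrow> int \<Rightarrow> complex" where
  "phm J n = (let N = int (2 ^ J); j = n mod N in
      if 0 < j \<and> 2 * j < N then - \<i> else if N < 2 * j \<and> j < N then \<i> else 1)"

lemma phihat_phm: "phihat J r m l n = phm J n * psihat J r m l n"
  unfolding phihat_def phm_def Let_def by simp

lemma phm_norm: "phm J n * cnj (phm J n) = 1"
  unfolding phm_def Let_def by simp

lemma cmod_phm: "cmod (phm J n) = 1"
  unfolding phm_def Let_def by simp

lemma phm_herm: "phm J (- n) = cnj (phm J n)"
proof -
  let ?N = "int (2 ^ J)"
  have N: "?N > 0" by simp
  have r: "0 \<le> n mod ?N" "n mod ?N < ?N" using N by simp_all
  show ?thesis unfolding phm_def Let_def zmod_zminus1_eq_if[of n]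
    using r by auto
qed

lemma phm_periodic: "phm J (n + int (2 ^ J)) = phm J n"
  unfolding phm_def Let_def by simp

context fixes J :: nat assumes J1: "1 \<le> J"
begin

lemma phihat_periodic: "periodic (2^J) (phihat J r m l)"
  using psihat_periodic[OF J1] unfolding periodic_def phihat_phm phm_periodic by simp

lemma phihat_herm: "hermitian (phihat J r m l)"
  using psihat_herm unfolding hermitian_def phihat_phm phm_herm by simp

lemma dft_phi: "dft (2^J) (phi J r m l) n = phihat J r m l n"
  unfolding phi_def by (rule dft_inv[OF phihat_periodic phihat_herm]) simp

lemma dft_psi: "dft (2^J) (psi J r m l) n = psihat J r m l n"
  unfolding psi_def by (rule dft_inv[OF psihat_periodic[OF J1] psihat_herm]) simp

lemma part1: "cmod (dft (2 ^ J) (phi J r m l) n) = cmod (dft (2 ^ J) (psi J r m l) n)"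
  unfolding dft_phi dft_psi phihat_phm norm_mult cmod_phm by simp

lemma part2: assumes "1 \<le> r" "1 \<le> m" "m \<le> J" "1 \<le> l" "l \<le> 2 ^ m - 2"
  shows "phi J r m l = hilbert (2 ^ J) (psi J r m l)"
proof
  fix k
  have eq: "phihat J r m l n = hmult (2 ^ J) n * psihat J r m l n" for n
  proof -
    let ?N = "int (2 ^ J)"
    let ?j = "n mod ?N"
    have r: "0 \<le> ?j" "?j < ?N" by simp_all
    show ?thesis
    proof (cases "(0 < ?j \<and> 2 * ?j < ?N) \<or> (?N < 2 * ?j \<and> ?j < ?N)")
      case True
      then show ?thesis unfolding phihat_def hmult_def Let_def by auto
    next
      case False
      have aux: "\<And>j N::int. 0 \<le> j \<Longrightarrow> j < N \<Longrightarrow> \<not> ((0 < j \<and> 2 * j < N) \<or> (N < 2 * j \<and> j < N)) \<Longrightarrow> j = 0 \<or> 2 * j = N"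
        by auto
      have j0: "?j = 0 \<or> 2 * ?j = ?N" by (rule aux[OF r False])
      have j: "?j = 0 \<or> ?j = hN J" using j0 unfolding Nint_eq[OF J1] by auto
      have "psihat J r m l n = psihat J r m l ?j" by (rule periodic_mod[OF psihat_periodic[OF J1]])
      also have "\<dots> = 0"
      proof (cases "?j = 0")
        case True
        then show ?thesis using psihat_zero[OF assms(1), of l J m] assms(4) by simp
      next
        case False
        have p2: "(2::nat) ^ m \<ge> 2" using assms(2)
          by (metis power_increasing power_one_right pos2 Suc_1 le_SucI one_le_numeral)
        have "l \<noteq> 2 ^ m - 1" using assms(5) p2 by linarith
        then show ?thesis using j False psihat_half[OF assms(1) J1 assms(2,3)] by simp
      qed
      finally show ?thesis using False unfolding phihat_def hmult_def Let_def by simp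
    qed
  qed
  show "phi J r m l k = hilbert (2 ^ J) (psi J r m l) k"
    unfolding phi_def hilbert_def dft_psi eq ..
qed

lemma idft_periodic: "idft (2^J) X (k + int (2^J)) = idft (2^J) X k"
proof -
  have "ee (2^J) ((k + int (2^J)) * n) = ee (2^J) (k * n)" for n
    using ee_periodic[of "2^J" "k * n" n] by (simp add: algebra_simps)
  then show ?thesis unfolding idft_ee by simp
qed

lemma part4: "(\<lambda>k. phi J r m l (k - a)) \<in> PiN (2 ^ J)"
  unfolding PiN_def phi_def
proof (intro CollectI allI)
  fix k
  show "Re (idft (2 ^ J) (phihat J r m l) (k + int (2 ^ J) - a)) = Re (idft (2 ^ J) (phihat J r m l) (k - a))"
    using idft_periodic[of _ "k - a"] by (simp add: algebra_simps)
qed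

end

lemma sum_blocks: "(\<Sum>n\<in>{0..<int (K * M)}. F n) = (\<Sum>t\<in>{0..<int M}. \<Sum>q<K. F (t + int q * int M))"
proof -
  have "(\<Sum>n\<in>{0..<int (K * M)}. F n) = (\<Sum>n<K * M. F (int n))" by (rule sum_int_nat)
  also have "\<dots> = (\<Sum>q<K. \<Sum>t<M. F (int (t + q * M)))" by (rule sum_mult_product)
  also have "\<dots> = (\<Sum>t<M. \<Sum>q<K. F (int t + int q * int M))" by (subst sum.swap) simp
  also have "\<dots> = (\<Sum>t\<in>{0..<int M}. \<Sum>q<K. F (t + int q * int M))" by (rule sum_int_nat[symmetric])
  finally show ?thesis .
qed

lemma ee_scale: assumes "m \<le> J"
  shows "ee (2 ^ J) (2 ^ m * d) = ee (2 ^ (J - m)) d"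
proof -
  have "(2::real) ^ J = 2 ^ m * 2 ^ (J - m)" using assms by (simp add: power_add[symmetric])
  then show ?thesis unfolding ee_def by (simp add: ac_simps)
qed

context fixes J :: nat assumes J1: "1 \<le> J"
begin

lemma part3: assumes "m \<le> J" "l < 2 ^ m" "l2 < 2 ^ m" "p < 2 ^ J div 2 ^ m" "s < 2 ^ J div 2 ^ m"
  shows "inner_N (2 ^ J) (\<lambda>k. phi J r m l (k - 2 ^ m * int p)) (\<lambda>k. phi J r m l2 (k - 2 ^ m * int s))
    = (if l = l2 \<and> p = s then 1 else 0)"
proof -
  let ?N = "2 ^ J :: nat"
  let ?K = "2 ^ m :: nat"
  let ?M = "2 ^ (J - m) :: nat"
  have NKM: "?N = ?K * ?M" using assms(1) by (simp add: power_add[symmetric])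
  have Mdiv: "2 ^ J div 2 ^ m = ?M" using NKM by simp
  have Mpos: "?M > 0" by simp
  define a where "a = (2::int) ^ m * int p"
  define b where "b = (2::int) ^ m * int s"
  let ?A = "phihat J r m l" and ?B = "phihat J r m l2"
  have re: "complex_of_real (Re (idft ?N X k)) = idft ?N X k" if "periodic ?N X" "hermitian X" for X k
    using idft_real'[OF that] by simp
  have "complex_of_real (inner_N ?N (\<lambda>k. phi J r m l (k - a)) (\<lambda>k. phi J r m l2 (k - b)))
      = (\<Sum>k\<in>{0..<int ?N}. idft ?N ?A (k - a) * cnj (idft ?N ?B (k - b)))"
    unfolding inner_N_def phi_def of_real_sum of_real_mult
    using re[OF phihat_periodic[OF J1] phihat_herm[OF J1]]
      idft_real[OF phihat_periodic[OF J1] phihat_herm[OF J1]] by simp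
  also have "\<dots> = (1 / of_nat ?N) * (\<Sum>n\<in>{0..<int ?N}. ?A n * cnj (?B n) * ee ?N ((b - a) * n))"
    by (rule planch) simp
  also have "\<dots> = (1 / of_nat ?N) * (\<Sum>n\<in>{0..<int ?N}. psihat J r m l n * cnj (psihat J r m l2 n) * ee ?N ((b - a) * n))"
  proof -
    have "?A n * cnj (?B n) = psihat J r m l n * cnj (psihat J r m l2 n)" for n
    proof -
      have "?A n * cnj (?B n) = (phm J n * cnj (phm J n)) * (psihat J r m l n * cnj (psihat J r m l2 n))"
        unfolding phihat_phm by (simp add: mult_ac)
      then show ?thesis unfolding phm_norm by simp
    qed
    then show ?thesis by simp
  qed
  also have "\<dots> = (1 / of_nat ?N) * (\<Sum>t\<in>{0..<int ?M}. \<Sum>q<?K.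
       psihat J r m l (t + int q * int ?M) * cnj (psihat J r m l2 (t + int q * int ?M)) * ee ?N ((b - a) * (t + int q * int ?M)))"
    unfolding NKM sum_blocks ..
  also have "\<dots> = (1 / of_nat ?N) * (\<Sum>t\<in>{0..<int ?M}. ee ?M ((int s - int p) * t) *
       (\<Sum>q<?K. psihat J r m l (t + int q * 2 ^ (J - m)) * cnj (psihat J r m l2 (t + int q * 2 ^ (J - m)))))"
  proof -
    have "ee ?N ((b - a) * (t + int q * int ?M)) = ee ?M ((int s - int p) * t)" for t q
    proof -
      have "(b - a) * (t + int q * int ?M) = 2 ^ m * ((int s - int p) * t) + int ?N * ((int s - int p) * int q)"
        unfolding a_def b_def NKM by (simp add: algebra_simps)
      then show ?thesis using ee_periodic[of ?N "2 ^ m * ((int s - int p) * t)" "(int s - int p) * int q"]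
        ee_scale[OF assms(1)] by simp
    qed
    then show ?thesis by (simp add: sum_distrib_left mult_ac)
  qed
  also have "\<dots> = (1 / of_nat ?N) * (\<Sum>t\<in>{0..<int ?M}. ee ?M ((int s - int p) * t) * (if l = l2 then 2 ^ m else 0))"
    using key[OF J1 assms(1-3)] by simp
  also have "\<dots> = (1 / of_nat ?N) * ((\<Sum>t\<in>{0..<int ?M}. ee ?M ((int s - int p) * t)) * (if l = l2 then 2 ^ m else 0))"
    by (simp only: sum_distrib_right)
  also have "\<dots> = (1 / of_nat ?N) * ((if int ?M dvd (int s - int p) then of_nat ?M else 0) * (if l = l2 then 2 ^ m else 0))"
    by (simp only: geom_ee[OF Mpos])
  also have "\<dots> = (if l = l2 \<and> p = s then 1 else 0)"
  proof -
    have "int ?M dvd (int s - int p) \<longleftrightarrow> p = s"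
      using dvd_diff_iff_eq[of "int s" ?M "int p"] assms(4,5) unfolding Mdiv by simp
    then show ?thesis unfolding NKM by auto
  qed
  finally have X: "complex_of_real (inner_N ?N (\<lambda>k. phi J r m l (k - a)) (\<lambda>k. phi J r m l2 (k - b)))
      = complex_of_real (if l = l2 \<and> p = s then 1 else 0)" by simp
  then show ?thesis unfolding a_def b_def of_real_eq_iff .
qed

end

lemma mult_entry: assumes "A \<in> carrier_mat n n" "B \<in> carrier_mat n n" "i < n" "j < n"
  shows "(A * B) $$ (i, j) = (\<Sum>t<n. A $$ (i, t) * B $$ (t, j))"
  using assms by (simp add: scalar_prod_def lessThan_atLeast0)

lemma span_abstract:
  fixes v :: "nat \<Rightarrow> nat \<Rightarrow> int \<Rightarrow> real"
  assumes NKM: "N = K * M" and Mpos: "M > 0" and Kpos: "K > 0"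
  and orth: "\<And>l l2 p s. l < K \<Longrightarrow> l2 < K \<Longrightarrow> p < M \<Longrightarrow> s < M \<Longrightarrow>
       inner_N N (v l p) (v l2 s) = (if l = l2 \<and> p = s then 1 else 0)"
  and per: "\<And>l p. periodic N (v l p)"
  and x: "x \<in> PiN N"
  shows "\<exists>c. x = (\<lambda>k. \<Sum>l<K. \<Sum>p<M. c l p * v l p k)"
proof -
  define w where "w j = v (j div M) (j mod M)" for j
  define V where "V = mat N N (\<lambda>(k, j). w j (int k))"
  have Vc: "V \<in> carrier_mat N N" unfolding V_def by simp
  have VTc: "transpose_mat V \<in> carrier_mat N N" using Vc by simp
  have wdm: "j div M < K" if "j < N" for j
    using that NKM Mpos by (simp add: less_mult_imp_div_less mult.commute)
  have worth: "(\<Sum>t<N. w i (int t) * w j (int t)) = (if i = j then 1 else 0)" if "i < N" "j < N" for i j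
  proof -
    have "(\<Sum>t<N. w i (int t) * w j (int t)) = inner_N N (w i) (w j)"
      unfolding inner_N_def sum_int_nat ..
    also have "\<dots> = (if i div M = j div M \<and> i mod M = j mod M then 1 else 0)"
      unfolding w_def using orth[OF wdm[OF that(1)] wdm[OF that(2)]] Mpos by simp
    also have "\<dots> = (if i = j then 1 else 0)"
      by (metis div_mult_mod_eq)
    finally show ?thesis .
  qed
  have TV: "transpose_mat V * V = 1\<^sub>m N"
  proof (rule eq_matI)
    fix i j assume "i < dim_row (1\<^sub>m N :: real mat)" "j < dim_col (1\<^sub>m N :: real mat)"
    then have ij: "i < N" "j < N" by simp_all
    have "(transpose_mat V * V) $$ (i, j) = (\<Sum>t<N. transpose_mat V $$ (i, t) * V $$ (t, j))"
      by (rule mult_entry[OF VTc Vc ij])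
    also have "\<dots> = (\<Sum>t<N. w i (int t) * w j (int t))"
      using ij Vc unfolding V_def by (intro sum.cong refl) simp
    also have "\<dots> = 1\<^sub>m N $$ (i, j)" using worth[OF ij] ij by simp
    finally show "(transpose_mat V * V) $$ (i, j) = 1\<^sub>m N $$ (i, j)" .
  qed (use Vc in auto)
  have VT: "V * transpose_mat V = 1\<^sub>m N"
    by (rule mat_mult_left_right_inverse[OF VTc Vc TV])
  have dual: "(\<Sum>j<N. w j (int k) * w j (int k')) = (if k = k' then 1 else 0)" if "k < N" "k' < N" for k k'
  proof -
    have "(V * transpose_mat V) $$ (k, k') = (\<Sum>j<N. V $$ (k, j) * transpose_mat V $$ (j, k'))"
      by (rule mult_entry[OF Vc VTc that])
    also have "\<dots> = (\<Sum>j<N. w j (int k) * w j (int k'))"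
      using that Vc unfolding V_def by (intro sum.cong refl) simp
    finally show ?thesis unfolding VT using that by simp
  qed
  define c where "c l p = (\<Sum>k'<N. v l p (int k') * x (int k'))" for l p
  have xnat: "x (int k) = (\<Sum>l<K. \<Sum>p<M. c l p * v l p (int k))" if "k < N" for k
  proof -
    have "(\<Sum>l<K. \<Sum>p<M. c l p * v l p (int k)) = (\<Sum>j<K * M. c (j div M) (j mod M) * w j (int k))"
      unfolding sum_mult_product w_def using Mpos by simp
    also have "\<dots> = (\<Sum>j<N. \<Sum>k'<N. x (int k') * (w j (int k) * w j (int k')))"
      unfolding NKM[symmetric] c_def w_def by (simp add: sum_distrib_left sum_distrib_right mult_ac)
    also have "\<dots> = (\<Sum>k'<N. x (int k') * (\<Sum>j<N. w j (int k) * w j (int k')))"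
      by (subst sum.swap) (simp add: sum_distrib_left)
    also have "\<dots> = (\<Sum>k'<N. if k' = k then x (int k) else 0)"
      using dual[OF that] by (intro sum.cong refl) auto
    also have "\<dots> = x (int k)" using that by simp
    finally show ?thesis by simp
  qed
  have Npos: "N > 0" using NKM Mpos Kpos by simp
  show ?thesis
  proof (intro exI[of _ c] ext)
    fix k :: int
    have px: "periodic N x" using x unfolding PiN_def periodic_def by simp
    define k0 where "k0 = nat (k mod int N)"
    have m1: "0 \<le> k mod int N" "k mod int N < int N" using Npos by simp_all
    have k00: "int k0 = k mod int N" unfolding k0_def using m1(1) by simp
    have "int k0 < int N" using k00 m1(2) by simp
    then have k01: "k0 < N" by simp
    note k0 = k00 k01
    have "x k = x (int k0)" unfolding k0 by (rule periodic_mod[OF px])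
    also have "\<dots> = (\<Sum>l<K. \<Sum>p<M. c l p * v l p (int k0))" by (rule xnat[OF k0(2)])
    also have "\<dots> = (\<Sum>l<K. \<Sum>p<M. c l p * v l p k)"
      unfolding k0 using periodic_mod[OF per] by simp
    finally show "x k = (\<Sum>l<K. \<Sum>p<M. c l p * v l p k)" .
  qed
qed


theorem proposition3p3:
  fixes J r m :: nat
  assumes "1 \<le> J" and "1 \<le> r" and "1 \<le> m" and "m \<le> J"
  shows "(\<forall>l < 2 ^ m. \<forall>n :: int.
            cmod (dft (2 ^ J) (phi J r m l) n) = cmod (dft (2 ^ J) (psi J r m l) n))
       \<and> (\<forall>l. 1 \<le> l \<and> l \<le> 2 ^ m - 2 \<longrightarrow> phi J r m l = hilbert (2 ^ J) (psi J r m l))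
       \<and> (\<forall>l < 2 ^ m. \<forall>l2 < 2 ^ m. \<forall>p < 2 ^ J div 2 ^ m. \<forall>s < 2 ^ J div 2 ^ m.
            inner_N (2 ^ J) (\<lambda>k. phi J r m l (k - 2 ^ m * int p))
                            (\<lambda>k. phi J r m l2 (k - 2 ^ m * int s))
            = (if l = l2 \<and> p = s then 1 else 0))
       \<and> (\<forall>l < 2 ^ m. \<forall>p < 2 ^ J div 2 ^ m.
            (\<lambda>k. phi J r m l (k - 2 ^ m * int p)) \<in> PiN (2 ^ J))
       \<and> (\<forall>x \<in> PiN (2 ^ J). \<exists>c :: nat \<Rightarrow> nat \<Rightarrow> real.
            x = (\<lambda>k. \<Sum>l < 2 ^ m. \<Sum>p < 2 ^ J div 2 ^ m. c l p * phi J r m l (k - 2 ^ m * int p)))"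
proof (intro conjI allI impI ballI)
  fix l :: nat and n :: int
  show "cmod (dft (2 ^ J) (phi J r m l) n) = cmod (dft (2 ^ J) (psi J r m l) n)"
    by (rule part1[OF assms(1)])
next
  fix l :: nat assume "1 \<le> l \<and> l \<le> 2 ^ m - 2"
  then show "phi J r m l = hilbert (2 ^ J) (psi J r m l)"
    using part2[OF assms(1) assms(2) assms(3) assms(4)] by blast
next
  fix l l2 p s :: nat
  assume "l < 2 ^ m" "l2 < 2 ^ m" "p < 2 ^ J div 2 ^ m" "s < 2 ^ J div 2 ^ m"
  then show "inner_N (2 ^ J) (\<lambda>k. phi J r m l (k - 2 ^ m * int p)) (\<lambda>k. phi J r m l2 (k - 2 ^ m * int s))
            = (if l = l2 \<and> p = s then 1 else 0)"
    by (rule part3[OF assms(1) assms(4)])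
next
  fix l p :: nat
  show "(\<lambda>k. phi J r m l (k - 2 ^ m * int p)) \<in> PiN (2 ^ J)" by (rule part4[OF assms(1)])
next
  fix x assume x: "x \<in> PiN (2 ^ J)"
  have Mdiv: "2 ^ J div 2 ^ m = (2::nat) ^ (J - m)" using assms(4) by (simp add: power_diff)
  have NKM: "(2::nat) ^ J = 2 ^ m * (2 ^ J div 2 ^ m)" unfolding Mdiv using assms(4)
    by (simp add: power_add[symmetric])
  show "\<exists>c :: nat \<Rightarrow> nat \<Rightarrow> real.
            x = (\<lambda>k. \<Sum>l < 2 ^ m. \<Sum>p < 2 ^ J div 2 ^ m. c l p * phi J r m l (k - 2 ^ m * int p))"
  proof (rule span_abstract[OF NKM _ _ _ _ x, where v = "\<lambda>l p k. phi J r m l (k - 2 ^ m * int p)"])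
    show "0 < 2 ^ J div (2::nat) ^ m" unfolding Mdiv by simp
    show "0 < (2::nat) ^ m" by simp
    fix l l2 p s :: nat
    assume "l < 2 ^ m" "l2 < 2 ^ m" "p < 2 ^ J div 2 ^ m" "s < 2 ^ J div 2 ^ m"
    then show "inner_N (2 ^ J) (\<lambda>k. phi J r m l (k - 2 ^ m * int p)) (\<lambda>k. phi J r m l2 (k - 2 ^ m * int s))
            = (if l = l2 \<and> p = s then 1 else 0)"
      by (rule part3[OF assms(1) assms(4)])
  next
    fix l p :: nat
    show "periodic (2 ^ J) (\<lambda>k. phi J r m l (k - 2 ^ m * int p))"
      using part4[OF assms(1), of r m l "2 ^ m * int p"] unfolding PiN_def periodic_def by simp
  qed
qed

end
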